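(* Let $y_0\in Y$. If $V_{per}(y_0)=\liminf_{T\to\infty}V_T(y_0)$, then $\liminf_{T\to\infty}V_T(y_0)\ge k^*(y_0)$.
   Context: Let $Y\subset\mathbb{R}^m$ be nonempty compact, $U_0$ a compact metric space, $U(\cdot):Y\rightsquigarrow U_0$ upper semicontinuous and compact-valued, and $f:\mathbb{R}^m\times U_0\to\mathbb{R}^m$, $k:\mathbb{R}^m\times U_0\to\mathbb{R}$ continuous. Put $A(y):=\{u\in U(y): f(y,u)\in Y\}$ and $G:=\{(y,u):y\in Y,\ u\in A(y)\}$. Standing assumption: $A(y)\ne\emptyset$ for all $y$. An admissible process from $z\in Y$ is a pair $(y(t),u(t))$ with $y(0)=z$, $u(t)\in A(y(t))$ and $y(t+1)=f(y(t),u(t))$. Let $\mathcal U_T(y_0)$ denote the admissible controls from $y_0$ on $\{0,\dots,T-1\}$, and set $V_T(y_0):=\frac1T\min_{u\in\mathcal U_T(y_0)}\sum_{t=0}^{T-1}k(y(t),u(t))$. Periodic value: - A $\mathcal T$-periodic admissible process ($\mathcal T$ a positive integer) is an admissible process $(y_{\mathcal T},u_{\mathcal T})$ on $\{0,1,\dots\}$ with $(y_{\mathcal T}(t+\mathcal T),u_{\mathcal T}(t+\mathcal T))=(y_{\mathcal T}(t),u_{\mathcal T}(t))$ for all $t$. - It is finite-time reachable from $y_0$ if for some integer $\bar t\ge0$ some $u\in\mathcal U_{\bar t}(y_0)$ has trajectory with $y(\bar t)=y_{\mathcal T}(0)$. - $V_{per}(y_0):=\inf\frac1{\mathcal T}\sum_{t=0}^{\mathcal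 T-1}k(y_{\mathcal T}(t),u_{\mathcal T}(t))$, where the infimum is over all $\mathcal T$ and all such finite-time-reachable $\mathcal T$-periodic processes. LP value: - $\mathcal P(G)$ denotes the Borel probability measures on $G$ and $\mathcal M_+(G)$ the finite nonnegative Borel measures on $G$. - $W:=\{\gamma\in\mathcal P(G):\int_G(\varphi(f(y,u))-\varphi(y))\,d\gamma=0\ \forall\varphi\in C(Y)\}$. - $k^*(y_0)$ is the infimum of $\int_Gk\,d\gamma$ over pairs $(\gamma,\xi)\in\mathcal P(G)\times\mathcal M_+(G)$ with $\gamma\in W$ and $\int_G(\varphi(y_0)-\varphi(y))\,d\gamma+\int_G(\varphi(f(y,u))-\varphi(y))\,d\xi=0$ for all $\varphi\in C(Y)$. *)

theory Defs
  imports "HOL-Probability.Probability"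
begin

text \<open>State space: a Euclidean space 'a (standing for R^m); controls live in a
  metric space 'b, the compact control set being U0 \<subseteq> 'b.
  The dynamics f and running cost k take pairs (y,u).\<close>

definition usc_on :: "'a::metric_space set \<Rightarrow> ('a \<Rightarrow> 'b::topological_space set) \<Rightarrow> bool" where
  "usc_on Y U \<longleftrightarrow> (\<forall>y\<in>Y. \<forall>V. open V \<and> U y \<subseteq> V \<longrightarrow>
      (\<exists>e>0. \<forall>y'\<in>Y. dist y' y < e \<longrightarrow> U y' \<subseteq> V))"

definition Aset :: "'a set \<Rightarrow> ('a \<Rightarrow> 'b set) \<Rightarrow> ('a \<times> 'b \<Rightarrow> 'a) \<Rightarrow> 'a \<Rightarrow> 'b set" where
  "Aset Y U f y = {u \<in> U y. f (y, u) \<in> Y}"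

definition Gset :: "'a set \<Rightarrow> ('a \<Rightarrow> 'b set) \<Rightarrow> ('a \<times> 'b \<Rightarrow> 'a) \<Rightarrow> ('a \<times> 'b) set" where
  "Gset Y U f = Sigma Y (Aset Y U f)"

fun traj :: "('a \<times> 'b \<Rightarrow> 'a) \<Rightarrow> 'a \<Rightarrow> (nat \<Rightarrow> 'b) \<Rightarrow> nat \<Rightarrow> 'a" where
  "traj f z u 0 = z"
| "traj f z u (Suc t) = f (traj f z u t, u t)"

text \<open>Admissible controls on {0,...,T-1} from z (values at times \<ge> T are irrelevant).\<close>
definition adm_controls :: "'a set \<Rightarrow> ('a \<Rightarrow> 'b set) \<Rightarrow> ('a \<times> 'b \<Rightarrow> 'a) \<Rightarrow> nat \<Rightarrow> 'a \<Rightarrow> (nat \<Rightarrow> 'b) set" where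
  "adm_controls Y U f T z = {u. \<forall>t<T. u t \<in> Aset Y U f (traj f z u t)}"

text \<open>V_T(z) (the minimum exists under the standing assumptions, so Inf = min).\<close>
definition VT :: "'a set \<Rightarrow> ('a \<Rightarrow> 'b set) \<Rightarrow> ('a \<times> 'b \<Rightarrow> 'a) \<Rightarrow> ('a \<times> 'b \<Rightarrow> real) \<Rightarrow> nat \<Rightarrow> 'a \<Rightarrow> real" where
  "VT Y U f k T z = (1 / real T) *
     Inf {\<Sum>t<T. k (traj f z u t, u t) | u. u \<in> adm_controls Y U f T z}"

definition periodic_process :: "'a set \<Rightarrow> ('a \<Rightarrow> 'b set) \<Rightarrow> ('a \<times> 'b \<Rightarrow> 'a) \<Rightarrow> nat \<Rightarrow> (nat \<Rightarrow> 'a) \<Rightarrow> (nat \<Rightarrow> 'b) \<Rightarrow> bool" where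
  "periodic_process Y U f P y u \<longleftrightarrow> 0 < P \<and>
     (\<forall>t. y t \<in> Y \<and> u t \<in> Aset Y U f (y t) \<and> y (Suc t) = f (y t, u t)) \<and>
     (\<forall>t. y (t + P) = y t \<and> u (t + P) = u t)"

definition reachable_from :: "'a set \<Rightarrow> ('a \<Rightarrow> 'b set) \<Rightarrow> ('a \<times> 'b \<Rightarrow> 'a) \<Rightarrow> 'a \<Rightarrow> 'a \<Rightarrow> bool" where
  "reachable_from Y U f z x \<longleftrightarrow>
     (\<exists>tb. \<exists>u \<in> adm_controls Y U f tb z. traj f z u tb = x)"

text \<open>Periodic value (Inf of the empty set is +\<infinity>).\<close>
definition Vper :: "'a set \<Rightarrow> ('a \<Rightarrow> 'b set) \<Rightarrow> ('a \<times> 'b \<Rightarrow> 'a) \<Rightarrow> ('a \<times> 'b \<Rightarrow> real) \<Rightarrow> 'a \<Rightarrow> ereal" where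
  "Vper Y U f k z = Inf {ereal ((1 / real P) * (\<Sum>t<P. k (y t, u t))) | P y u.
      periodic_process Y U f P y u \<and> reachable_from Y U f z (y 0)}"

definition prob_on :: "('a::topological_space \<times> 'b::topological_space) set \<Rightarrow> ('a \<times> 'b) measure \<Rightarrow> bool" where
  "prob_on G \<gamma> \<longleftrightarrow> prob_space \<gamma> \<and> sets \<gamma> = sets (restrict_space borel G)"

definition finmeas_on :: "('a::topological_space \<times> 'b::topological_space) set \<Rightarrow> ('a \<times> 'b) measure \<Rightarrow> bool" where
  "finmeas_on G \<xi> \<longleftrightarrow> finite_measure \<xi> \<and> sets \<xi> = sets (restrict_space borel G)"

definition Wset :: "'a::topological_space set \<Rightarrow> ('a \<Rightarrow> 'b::topological_space set) \<Rightarrow> ('a \<times> 'b \<Rightarrow> 'a) \<Rightarrow> ('a \<times> 'b) measure set" where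
  "Wset Y U f = {\<gamma>. prob_on (Gset Y U f) \<gamma> \<and>
     (\<forall>\<phi>::'a \<Rightarrow> real. continuous_on Y \<phi> \<longrightarrow>
        (\<integral>p. \<phi> (f p) - \<phi> (fst p) \<partial>\<gamma>) = 0)}"

definition kstar :: "'a::topological_space set \<Rightarrow> ('a \<Rightarrow> 'b::topological_space set) \<Rightarrow> ('a \<times> 'b \<Rightarrow> 'a) \<Rightarrow> ('a \<times> 'b \<Rightarrow> real) \<Rightarrow> 'a \<Rightarrow> ereal" where
  "kstar Y U f k z = Inf {ereal (\<integral>p. k p \<partial>\<gamma>) | \<gamma> \<xi>.
      prob_on (Gset Y U f) \<gamma> \<and> finmeas_on (Gset Y U f) \<xi> \<and> \<gamma> \<in> Wset Y U f \<and>
      (\<forall>\<phi>::'a \<Rightarrow> real. continuous_on Y \<phi> \<longrightarrow>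
         (\<integral>p. \<phi> z - \<phi> (fst p) \<partial>\<gamma>) + (\<integral>p. \<phi> (f p) - \<phi> (fst p) \<partial>\<xi>) = 0)}"

end

theory Submission
  imports Defs
begin

lemma traj_in:
  assumes "y0 \<in> Y" "v \<in> adm_controls Y U f tb y0" "s \<le> tb"
  shows "traj f y0 v s \<in> Y"
  using assms(3)
proof (induction s)
  case 0 then show ?case using assms by simp
next
  case (Suc s)
  then have "v s \<in> Aset Y U f (traj f y0 v s)" using assms(2) unfolding adm_controls_def by auto
  then show ?case by (simp add: Aset_def)
qed

lemma key:
  fixes Y :: "'a::euclidean_space set" and U0 :: "'b::metric_space set"
    and f :: "'a \<times> 'b \<Rightarrow> 'a" and k :: "'a \<times> 'b \<Rightarrow> real"
  assumes U0: "\<forall>y\<in>Y. U y \<subseteq> U0"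
    and fc: "continuous_on (UNIV \<times> U0) f"
    and kc: "continuous_on (UNIV \<times> U0) k"
    and y0: "y0 \<in> Y"
    and per: "periodic_process Y U f P y u"
    and re: "reachable_from Y U f y0 (y 0)"
  shows "\<exists>\<gamma> \<xi>. ereal ((1 / real P) * (\<Sum>t<P. k (y t, u t))) = ereal (\<integral>p. k p \<partial>\<gamma>) \<and>
      prob_on (Gset Y U f) \<gamma> \<and> finmeas_on (Gset Y U f) \<xi> \<and> \<gamma> \<in> Wset Y U f \<and>
      (\<forall>\<phi>::'a \<Rightarrow> real. continuous_on Y \<phi> \<longrightarrow>
         (\<integral>p. \<phi> y0 - \<phi> (fst p) \<partial>\<gamma>) + (\<integral>p. \<phi> (f p) - \<phi> (fst p) \<partial>\<xi>) = 0)"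
proof -
  define G where "G = Gset Y U f"
  define M0 where "M0 = restrict_space borel G"
  have spM0: "space M0 = G" unfolding M0_def by (simp add: space_restrict_space)
  have Pp: "0 < P" and yY: "\<And>t. y t \<in> Y" and uA: "\<And>t. u t \<in> Aset Y U f (y t)"
    and ys: "\<And>t. y (Suc t) = f (y t, u t)" and yP: "\<And>t. y (t + P) = y t"
    using per unfolding periodic_process_def by auto
  obtain tb v where v: "v \<in> adm_controls Y U f tb y0" and vt: "traj f y0 v tb = y 0"
    using re unfolding reachable_from_def by auto
  have GsubY: "G \<subseteq> Y \<times> U0" using U0 unfolding G_def Gset_def Aset_def by auto
  have fG: "\<And>p. p \<in> G \<Longrightarrow> f p \<in> Y" unfolding G_def Gset_def Aset_def by auto
  have fcG: "continuous_on G f" using continuous_on_subset[OF fc] GsubY by auto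
  have kcG: "continuous_on G k" using continuous_on_subset[OF kc] GsubY by auto
  define z where "z s = (if s \<le> tb then traj f y0 v s else y (s - tb))" for s
  define w where "w s = (if s < tb then v s else u (s - tb))" for s
  have zG: "(z s, w s) \<in> G" for s
  proof (cases "s < tb")
    case True
    then have "v s \<in> Aset Y U f (traj f y0 v s)" using v unfolding adm_controls_def by auto
    then show ?thesis using True traj_in[OF y0 v, of s] unfolding z_def w_def G_def Gset_def by auto
  next
    case False
    then have "z s = y (s - tb)" using vt by (cases "s = tb") (auto simp: z_def)
    then show ?thesis using False yY uA unfolding w_def G_def Gset_def by auto
  qed
  have zs: "z (Suc s) = f (z s, w s)" for s
  proof (cases "s < tb")
    case True then show ?thesis by (auto simp: z_def w_def)
  next
    case False
    then have "z s = y (s - tb)" using vt by (cases "s = tb") (auto simp: z_def)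
    moreover have "z (Suc s) = y (Suc (s - tb))" using False by (auto simp: z_def Suc_diff_le)
    ultimately show ?thesis using False ys by (simp add: w_def)
  qed
  have z0: "z 0 = y0" by (simp add: z_def)
  have ztb: "z (tb + t) = y t" for t using vt by (cases t) (auto simp: z_def)
  define \<gamma> where "\<gamma> = distr (measure_pmf (pmf_of_set {..<P})) M0 (\<lambda>t. (y t, u t))"
  define I where "I = Sigma {..<P} (\<lambda>t. {..<tb + t})"
  define \<xi> where "\<xi> = distr (density (count_space I) (\<lambda>_. ennreal (1 / real P))) M0 (\<lambda>(t,s). (z s, w s))"
  have finI: "finite I" unfolding I_def by auto
  have ymeas: "(\<lambda>t. (y t, u t)) \<in> measure_pmf (pmf_of_set {..<P}) \<rightarrow>\<^sub>M M0"
    using yY uA by (auto simp: spM0 G_def Gset_def)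
  have zmeas: "(\<lambda>(t,s). (z s, w s)) \<in> density (count_space I) (\<lambda>_. ennreal (1 / real P)) \<rightarrow>\<^sub>M M0"
    using zG by (subst measurable_cong_sets[OF sets_density refl]) (auto simp: spM0)
  have int\<gamma>: "(\<integral>p. g p \<partial>\<gamma>) = (\<Sum>t<P. g (y t, u t)) / real P" if "continuous_on G g" for g :: "_ \<Rightarrow> real"
  proof -
    have "g \<in> borel_measurable M0" unfolding M0_def by (rule borel_measurable_continuous_on_restrict[OF that])
    then have "(\<integral>p. g p \<partial>\<gamma>) = (\<integral>t. g (y t, u t) \<partial>measure_pmf (pmf_of_set {..<P}))"
      unfolding \<gamma>_def by (rule integral_distr[OF ymeas])
    also have "\<dots> = (\<Sum>t<P. g (y t, u t)) / real P"
      using Pp by (subst integral_pmf_of_set) auto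
    finally show ?thesis .
  qed
  have int\<xi>: "(\<integral>p. g p \<partial>\<xi>) = (\<Sum>(t,s)\<in>I. g (z s, w s)) / real P" if "continuous_on G g" for g :: "_ \<Rightarrow> real"
  proof -
    have "g \<in> borel_measurable M0" unfolding M0_def by (rule borel_measurable_continuous_on_restrict[OF that])
    then have "(\<integral>p. g p \<partial>\<xi>) = (\<integral>x. g (case x of (t,s) \<Rightarrow> (z s, w s)) \<partial>density (count_space I) (\<lambda>_. ennreal (1 / real P)))"
      unfolding \<xi>_def by (rule integral_distr[OF zmeas])
    also have "\<dots> = (\<integral>x. (1 / real P) *\<^sub>R g (case x of (t,s) \<Rightarrow> (z s, w s)) \<partial>count_space I)"
      by (rule integral_density) auto
    also have "\<dots> = (\<Sum>x\<in>I. (1 / real P) * g (case x of (t,s) \<Rightarrow> (z s, w s)))"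
      using finI by (simp add: lebesgue_integral_count_space_finite sum_divide_distrib)
    also have "\<dots> = (\<Sum>(t,s)\<in>I. g (z s, w s)) / real P"
      by (simp add: sum_divide_distrib[symmetric] case_prod_unfold)
    finally show ?thesis .
  qed
  have cphi: "continuous_on G (\<lambda>p. \<phi> (f p) - \<phi> (fst p))" if "continuous_on Y \<phi>" for \<phi> :: "'a \<Rightarrow> real"
  proof -
    have "continuous_on G (\<lambda>p. \<phi> (f p))"
      by (rule continuous_on_compose2[OF that fcG]) (use fG in auto)
    moreover have "continuous_on G (\<lambda>p. \<phi> (fst p))"
      by (rule continuous_on_compose2[OF that continuous_on_fst[OF continuous_on_id]]) (use GsubY in auto)
    ultimately show ?thesis by (intro continuous_intros)
  qed
  have cphi2: "continuous_on G (\<lambda>p. \<phi> y0 - \<phi> (fst p))" if "continuous_on Y \<phi>" for \<phi> :: "'a \<Rightarrow> real"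
  proof -
    have "continuous_on G (\<lambda>p. \<phi> (fst p))"
      by (rule continuous_on_compose2[OF that continuous_on_fst[OF continuous_on_id]]) (use GsubY in auto)
    then show ?thesis by (intro continuous_intros)
  qed
  have prob: "prob_on G \<gamma>"
    unfolding prob_on_def \<gamma>_def M0_def[symmetric]
    using measure_pmf.prob_space_distr[OF ymeas] by simp
  have fin: "finmeas_on G \<xi>"
    unfolding finmeas_on_def M0_def[symmetric]
  proof
    have "finite_measure (density (count_space I) (\<lambda>_. ennreal (1 / real P)))"
      by (rule finite_measureI) (simp add: emeasure_density_const finI ennreal_mult_eq_top_iff)
    then show "finite_measure \<xi>" unfolding \<xi>_def by (rule finite_measure.finite_measure_distr[OF _ zmeas])
  qed (simp add: \<xi>_def)
  have W: "\<gamma> \<in> Wset Y U f"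
    unfolding Wset_def G_def[symmetric]
  proof (intro CollectI conjI allI impI prob)
    fix \<phi> :: "'a \<Rightarrow> real" assume c: "continuous_on Y \<phi>"
    have "(\<integral>p. \<phi> (f p) - \<phi> (fst p) \<partial>\<gamma>) = (\<Sum>t<P. \<phi> (y (Suc t)) - \<phi> (y t)) / real P"
      by (simp add: int\<gamma>[OF cphi[OF c]] ys)
    also have "\<dots> = 0" using yP[of 0] sum_lessThan_telescope[of "\<lambda>t. \<phi> (y t)" P] by simp
    finally show "(\<integral>p. \<phi> (f p) - \<phi> (fst p) \<partial>\<gamma>) = 0" .
  qed
  have eq: "(\<integral>p. \<phi> y0 - \<phi> (fst p) \<partial>\<gamma>) + (\<integral>p. \<phi> (f p) - \<phi> (fst p) \<partial>\<xi>) = 0"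
    if c: "continuous_on Y \<phi>" for \<phi> :: "'a \<Rightarrow> real"
  proof -
    have "(\<Sum>(t,s)\<in>I. \<phi> (f (z s, w s)) - \<phi> (fst (z s, w s))) = (\<Sum>t<P. \<Sum>s<tb+t. \<phi> (z (Suc s)) - \<phi> (z s))"
      unfolding I_def by (subst sum.Sigma[symmetric]) (auto simp: zs)
    also have "\<dots> = (\<Sum>t<P. \<phi> (y t) - \<phi> y0)"
      by (rule sum.cong[OF refl]) (simp add: sum_lessThan_telescope[of "\<lambda>s. \<phi> (z s)"] ztb z0)
    finally have A: "(\<Sum>(t,s)\<in>I. \<phi> (f (z s, w s)) - \<phi> (z s)) = (\<Sum>t<P. \<phi> (y t)) - real P * \<phi> y0"
      by (simp add: sum_subtractf)
    have B: "(\<Sum>t<P. \<phi> y0 - \<phi> (y t)) = real P * \<phi> y0 - (\<Sum>t<P. \<phi> (y t))"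
      by (simp add: sum_subtractf)
    show ?thesis
      using Pp by (simp add: int\<gamma>[OF cphi2[OF c]] int\<xi>[OF cphi[OF c]] A B add_divide_distrib[symmetric])
  qed
  show ?thesis
    apply (rule exI[of _ \<gamma>], rule exI[of _ \<xi>])
    using prob fin W eq int\<gamma>[OF kcG] unfolding G_def by auto
qed


theorem corollary2p5:
  fixes Y :: "'a::euclidean_space set"
    and U0 :: "'b::metric_space set"
    and U :: "'a \<Rightarrow> 'b set"
    and f :: "'a \<times> 'b \<Rightarrow> 'a"
    and k :: "'a \<times> 'b \<Rightarrow> real"
    and y0 :: 'a
  assumes "compact Y" and "Y \<noteq> {}"
    and "compact U0"
    and "\<forall>y\<in>Y. U y \<subseteq> U0 \<and> compact (U y)"
    and "usc_on Y U"
    and "continuous_on (UNIV \<times> U0) f"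
    and "continuous_on (UNIV \<times> U0) k"
    and "\<forall>y\<in>Y. Aset Y U f y \<noteq> {}"
    and "y0 \<in> Y"
    and "Vper Y U f k y0 = liminf (\<lambda>T. ereal (VT Y U f k T y0))"
  shows "liminf (\<lambda>T. ereal (VT Y U f k T y0)) \<ge> kstar Y U f k y0"
proof -
  have U0: "\<forall>y\<in>Y. U y \<subseteq> U0" using assms(4) by auto
  have "kstar Y U f k y0 \<le> Vper Y U f k y0"
    unfolding kstar_def Vper_def
  proof (rule Inf_superset_mono, rule subsetI)
    fix x assume "x \<in> {ereal ((1 / real P) * (\<Sum>t<P. k (y t, u t))) | P y u.
      periodic_process Y U f P y u \<and> reachable_from Y U f y0 (y 0)}"
    then obtain P y u where x: "x = ereal ((1 / real P) * (\<Sum>t<P. k (y t, u t)))"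
      and p: "periodic_process Y U f P y u" and r: "reachable_from Y U f y0 (y 0)" by blast
    from key[OF U0 assms(6) assms(7) assms(9) p r] x
    show "x \<in> {ereal (\<integral>p. k p \<partial>\<gamma>) | \<gamma> \<xi>.
      prob_on (Gset Y U f) \<gamma> \<and> finmeas_on (Gset Y U f) \<xi> \<and> \<gamma> \<in> Wset Y U f \<and>
      (\<forall>\<phi>::'a \<Rightarrow> real. continuous_on Y \<phi> \<longrightarrow>
         (\<integral>p. \<phi> y0 - \<phi> (fst p) \<partial>\<gamma>) + (\<integral>p. \<phi> (f p) - \<phi> (fst p) \<partial>\<xi>) = 0)}"
      by blast
  qed
  then show ?thesis using assms(10) by simp
qed

end
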